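(* Let $\mathcal{R},\mathcal{V},\mathcal{R}',\mathcal{V}'$ be finite sets with $|\mathcal{R}|=|\mathcal{R}'|$. For any positive integer $k$ and any deterministic privacy mechanism $\Delta=(\mathcal{R},\mathcal{V},\mathcal{R}',\mathcal{V}',\Pi,\Delta)$: $\Delta$ is a $k$-anonymization if and only if $\Delta$ is a $Pk$-anonymization.
   Context: A table on $(\mathcal{R},\mathcal{V})$ is a map $\mathcal{R}\to\mathcal{V}$; $\mathcal{T}$, $\mathcal{T}'$ denote the sets of tables on $(\mathcal{R},\mathcal{V})$ and $(\mathcal{R}',\mathcal{V}')$. For sets $X,Y$, $X\to Y$ is the set of maps $X\to Y$. A privacy mechanism is $(\mathcal{R},\mathcal{V},\mathcal{R}',\mathcal{V}',\Pi,\Delta)$ with $\Pi$ uniformly distributed over bijections $\mathcal{R}\to\mathcal{R}'$ and $\Delta$ a random variable in $\mathcal{T}\to(\mathcal{R}\to\mathcal{V}')$; it is a privacy mechanism from $T$ to $T'$ (random variables on $\mathcal{T},\mathcal{T}'$) if $T,\Pi,\Delta$ are mutually independent and $\Delta(T)=T'\circ\Pi$. It is deterministic if for each $\tau\in\mathcal{T}$ there is a unique table $\hat\tau$ with $\Delta(\tau)=\hat\tau$ (with probability one). $\tau'$ is $k$-anonymous if for every $r'\in\mathcal{R}'$ there are at least $k$ elements $\hat r'\in\mathcal{R}'$ with $\tau'(\hat r')=\tau'(r')$. $(\Delta,\tau')$ is $Pk$-anonymous if for all random variables $T,T'$ such that $\Delta$ is a privacy mechanism from $T$ to $T'$ and all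 $r\in\mathcal{R}$, $r'\in\mathcal{R}'$, $\Pr[\Pi(r)=r'\mid T'=\tau']\le1/k$. Call $\tau'\in\mathcal{T}'$ attainable if some $\tau\in\mathcal{T}$ has $\Pr[\Delta(\tau)=\tau'\circ\Pi]\neq0$. $\Delta$ is a $Pk$-anonymization if $(\Delta,\tau')$ is $Pk$-anonymous for every attainable $\tau'$, and a $k$-anonymization if every attainable $\tau'$ is $k$-anonymous. *)

theory Defs
  imports "HOL-Probability.Probability"
begin

text \<open>Tables on (R,V) are functions 'r \<Rightarrow> 'v, tables on (R',V') are 'r2 \<Rightarrow> 'v2.
 Prm : 'w \<Rightarrow> ('r \<Rightarrow> 'r2) is the random bijection,
 Dl : 'w \<Rightarrow> (('r \<Rightarrow> 'v) \<Rightarrow> ('r \<Rightarrow> 'v2)) is the random map Delta.\<close>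

definition cprob :: "'w measure \<Rightarrow> 'w set \<Rightarrow> 'w set \<Rightarrow> real" where
  "cprob M A B = measure M (A \<inter> B) / measure M B"

definition mutually_indep3 ::
  "'w measure \<Rightarrow> ('w \<Rightarrow> 'a) \<Rightarrow> ('w \<Rightarrow> 'b) \<Rightarrow> ('w \<Rightarrow> 'c) \<Rightarrow> bool" where
  "mutually_indep3 M X Y Z \<longleftrightarrow>
     (\<forall>A B C. measure M {w \<in> space M. X w \<in> A \<and> Y w \<in> B \<and> Z w \<in> C}
        = measure M {w \<in> space M. X w \<in> A} * measure M {w \<in> space M. Y w \<in> B}
          * measure M {w \<in> space M. Z w \<in> C})"

definition privacy_mechanism ::
  "'w measure \<Rightarrow> ('w \<Rightarrow> 'r \<Rightarrow> 'r2) \<Rightarrow> ('w \<Rightarrow> ('r \<Rightarrow> 'v) \<Rightarrow> ('r \<Rightarrow> 'v2)) \<Rightarrow> bool" where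
  "privacy_mechanism M Prm Dl \<longleftrightarrow>
     prob_space M \<and>
     Prm \<in> M \<rightarrow>\<^sub>M count_space UNIV \<and>
     Dl \<in> M \<rightarrow>\<^sub>M count_space UNIV \<and>
     (\<forall>\<pi>::'r \<Rightarrow> 'r2. bij \<pi> \<longrightarrow>
        measure M {w \<in> space M. Prm w = \<pi>} = 1 / real (card {f::'r \<Rightarrow> 'r2. bij f}))"

definition mechanism_from ::
  "'w measure \<Rightarrow> ('w \<Rightarrow> 'r \<Rightarrow> 'r2) \<Rightarrow> ('w \<Rightarrow> ('r \<Rightarrow> 'v) \<Rightarrow> ('r \<Rightarrow> 'v2))
   \<Rightarrow> ('w \<Rightarrow> 'r \<Rightarrow> 'v) \<Rightarrow> ('w \<Rightarrow> 'r2 \<Rightarrow> 'v2) \<Rightarrow> bool" where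
  "mechanism_from M Prm Dl T T' \<longleftrightarrow>
     privacy_mechanism M Prm Dl \<and>
     T \<in> M \<rightarrow>\<^sub>M count_space UNIV \<and>
     T' \<in> M \<rightarrow>\<^sub>M count_space UNIV \<and>
     mutually_indep3 M T Prm Dl \<and>
     (AE w in M. Dl w (T w) = T' w \<circ> Prm w)"

definition deterministic_mech ::
  "'w measure \<Rightarrow> ('w \<Rightarrow> 'r \<Rightarrow> 'r2) \<Rightarrow> ('w \<Rightarrow> ('r \<Rightarrow> 'v) \<Rightarrow> ('r \<Rightarrow> 'v2)) \<Rightarrow> bool" where
  "deterministic_mech M Prm Dl \<longleftrightarrow>
     (\<forall>\<tau>. \<exists>!\<tau>h. measure M {w \<in> space M. Dl w \<tau> = \<tau>h} = 1)"

definition k_anonymous :: "nat \<Rightarrow> ('r2 \<Rightarrow> 'v2) \<Rightarrow> bool" where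
  "k_anonymous k \<tau>' \<longleftrightarrow> (\<forall>r'. card {rh. \<tau>' rh = \<tau>' r'} \<ge> k)"

definition Pk_anonymous ::
  "'w measure \<Rightarrow> ('w \<Rightarrow> 'r \<Rightarrow> 'r2) \<Rightarrow> ('w \<Rightarrow> ('r \<Rightarrow> 'v) \<Rightarrow> ('r \<Rightarrow> 'v2))
   \<Rightarrow> nat \<Rightarrow> ('r2 \<Rightarrow> 'v2) \<Rightarrow> bool" where
  "Pk_anonymous M Prm Dl k \<tau>' \<longleftrightarrow>
     (\<forall>(T::'w \<Rightarrow> 'r \<Rightarrow> 'v) (T'::'w \<Rightarrow> 'r2 \<Rightarrow> 'v2). mechanism_from M Prm Dl T T' \<longrightarrow>
        (\<forall>r r'. cprob M {w \<in> space M. Prm w r = r'} {w \<in> space M. T' w = \<tau>'} \<le> 1 / real k))"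

definition attainable ::
  "'w measure \<Rightarrow> ('w \<Rightarrow> 'r \<Rightarrow> 'r2) \<Rightarrow> ('w \<Rightarrow> ('r \<Rightarrow> 'v) \<Rightarrow> ('r \<Rightarrow> 'v2)) \<Rightarrow> ('r2 \<Rightarrow> 'v2) \<Rightarrow> bool" where
  "attainable M Prm Dl \<tau>' \<longleftrightarrow>
     (\<exists>\<tau>. measure M {w \<in> space M. Dl w \<tau> = \<tau>' \<circ> Prm w} \<noteq> 0)"

definition Pk_anonymization ::
  "'w measure \<Rightarrow> ('w \<Rightarrow> 'r \<Rightarrow> 'r2) \<Rightarrow> ('w \<Rightarrow> ('r \<Rightarrow> 'v) \<Rightarrow> ('r \<Rightarrow> 'v2)) \<Rightarrow> nat \<Rightarrow> bool" where
  "Pk_anonymization M Prm Dl k \<longleftrightarrow>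
     (\<forall>\<tau>'. attainable M Prm Dl \<tau>' \<longrightarrow> Pk_anonymous M Prm Dl k \<tau>')"

definition k_anonymization ::
  "'w measure \<Rightarrow> ('w \<Rightarrow> 'r \<Rightarrow> 'r2) \<Rightarrow> ('w \<Rightarrow> ('r \<Rightarrow> 'v) \<Rightarrow> ('r \<Rightarrow> 'v2)) \<Rightarrow> nat \<Rightarrow> bool" where
  "k_anonymization M Prm Dl k \<longleftrightarrow>
     (\<forall>\<tau>'. attainable M Prm Dl \<tau>' \<longrightarrow> k_anonymous k \<tau>')"

end

theory Submission
  imports Defs
begin

lemma meas_pred:
  assumes "X \<in> M \<rightarrow>\<^sub>M count_space UNIV"
  shows "{w \<in> space M. P (X w)} \<in> sets M"
proof -
  have "{w \<in> space M. P (X w)} = X -` {x. P x} \<inter> space M" by auto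
  thus ?thesis using measurable_sets[OF assms, of "{x. P x}"] by simp
qed

lemma meas_pair:
  assumes "X \<in> M \<rightarrow>\<^sub>M count_space (UNIV::'a::countable set)"
      and "Y \<in> M \<rightarrow>\<^sub>M count_space (UNIV::'b::countable set)"
  shows "(\<lambda>w. (X w, Y w)) \<in> M \<rightarrow>\<^sub>M count_space UNIV"
proof -
  have "(\<lambda>w. (X w, Y w)) \<in> M \<rightarrow>\<^sub>M count_space (UNIV::'a set) \<Otimes>\<^sub>M count_space (UNIV::'b set)"
    using assms by measurable
  thus ?thesis by (simp add: pair_measure_countable)
qed

lemma meas_comp:
  assumes "X \<in> M \<rightarrow>\<^sub>M count_space UNIV"
  shows "(\<lambda>w. f (X w)) \<in> M \<rightarrow>\<^sub>M count_space UNIV"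
  using measurable_compose[OF assms, of f "count_space UNIV"] by simp

lemma sum_split:
  assumes "prob_space M" "X \<in> M \<rightarrow>\<^sub>M count_space (UNIV::'a::finite set)" "E \<in> sets M"
  shows "measure M ({w\<in>space M. X w \<in> S} \<inter> E) = (\<Sum>x\<in>S. measure M ({w\<in>space M. X w = x} \<inter> E))"
proof -
  interpret prob_space M by fact
  have "{w\<in>space M. X w \<in> S} \<inter> E = (\<Union>x\<in>S. {w\<in>space M. X w = x} \<inter> E)" by auto
  moreover have "measure M (\<Union>x\<in>S. {w\<in>space M. X w = x} \<inter> E) = (\<Sum>x\<in>S. measure M ({w\<in>space M. X w = x} \<inter> E))"
    by (rule finite_measure_finite_Union) (use assms meas_pred[OF assms(2)] in \<open>auto simp: disjoint_family_on_def\<close>)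
  ultimately show ?thesis by simp
qed

lemma cancel_bij: "bij \<pi> \<Longrightarrow> f \<circ> \<pi> = g \<circ> \<pi> \<Longrightarrow> f = g"
proof
  fix x assume b: "bij \<pi>" and e: "f \<circ> \<pi> = g \<circ> \<pi>"
  have "f (\<pi> (inv \<pi> x)) = g (\<pi> (inv \<pi> x))" using e by (simp add: fun_eq_iff)
  thus "f x = g x" using b by (simp add: bij_is_surj surj_f_inv_f)
qed

lemma count_lemma:
  fixes f :: "('r::finite \<Rightarrow> 'r2::finite) \<Rightarrow> real" and \<tau>' :: "'r2 \<Rightarrow> 'v2"
  assumes nn: "\<And>\<pi>. f \<pi> \<ge> 0" and inv: "\<And>\<pi> t. \<tau>' \<circ> t = \<tau>' \<Longrightarrow> f (t \<circ> \<pi>) = f \<pi>"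
      and kc: "k \<le> card {rh. \<tau>' rh = \<tau>' r'}"
  shows "real k * (\<Sum>\<pi>\<in>{\<pi>. bij \<pi> \<and> \<pi> r = r'}. f \<pi>) \<le> (\<Sum>\<pi>\<in>{\<pi>. bij \<pi>}. f \<pi>)"
proof -
  define S where "S r'' = (\<Sum>\<pi>\<in>{\<pi>. bij \<pi> \<and> \<pi> r = r''}. f \<pi>)" for r''
  define C where "C = {rh. \<tau>' rh = \<tau>' r'}"
  have eq: "S r'' = S r'" if "r'' \<in> C" for r''
  proof -
    define t where "t = (\<lambda>x. if x = r' then r'' else if x = r'' then r' else x)"
    have tt: "t (t x) = x" for x by (auto simp: t_def)
    have bt: "bij t" by (rule o_bij[of t t]) (auto simp: fun_eq_iff tt)
    have tau: "\<tau>' \<circ> t = \<tau>'" using that by (auto simp: fun_eq_iff t_def C_def)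
    have "S r' = (\<Sum>\<pi>\<in>{\<pi>. bij \<pi> \<and> \<pi> r = r''}. f \<pi>)" unfolding S_def
    proof (rule sum.reindex_bij_witness[of _ "\<lambda>\<pi>. t \<circ> \<pi>" "\<lambda>\<pi>. t \<circ> \<pi>"])
      fix a show "t \<circ> (t \<circ> a) = a" by (simp add: fun_eq_iff tt)
    next
      fix a assume "a \<in> {\<pi>. bij \<pi> \<and> \<pi> r = r'}"
      thus "t \<circ> a \<in> {\<pi>. bij \<pi> \<and> \<pi> r = r''}" using bt by (auto simp: bij_comp t_def)
    next
      fix a show "t \<circ> (t \<circ> a) = a" by (simp add: fun_eq_iff tt)
    next
      fix a assume "a \<in> {\<pi>. bij \<pi> \<and> \<pi> r = r''}"
      thus "t \<circ> a \<in> {\<pi>. bij \<pi> \<and> \<pi> r = r'}" using bt by (auto simp: bij_comp t_def)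
    next
      fix a show "f (t \<circ> a) = f a" using inv[OF tau] .
    qed
    thus ?thesis unfolding S_def by simp
  qed
  have "real k * S r' \<le> real (card C) * S r'"
    using kc unfolding C_def S_def by (intro mult_right_mono sum_nonneg) (auto simp: nn)
  also have "\<dots> = (\<Sum>r''\<in>C. S r'')" using eq by simp
  also have "\<dots> \<le> (\<Sum>r''\<in>UNIV. S r'')"
    by (rule sum_mono2) (auto simp: S_def nn sum_nonneg)
  also have "\<dots> = (\<Sum>\<pi>\<in>{\<pi>. bij \<pi>}. f \<pi>)"
    unfolding S_def using sum.group[of "{\<pi>::'r\<Rightarrow>'r2. bij \<pi>}" UNIV "\<lambda>\<pi>. \<pi> r" f] by simp
  finally show ?thesis unfolding S_def .
qed

context
  fixes M :: "'w measure"
    and Prm :: "'w \<Rightarrow> 'r::finite \<Rightarrow> 'r2::finite"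
    and Dl :: "'w \<Rightarrow> ('r \<Rightarrow> 'v::finite) \<Rightarrow> ('r \<Rightarrow> 'v2::finite)"
  assumes card: "CARD('r) = CARD('r2)"
    and pm: "privacy_mechanism M Prm Dl"
    and det: "deterministic_mech M Prm Dl"
begin

lemma PS: "prob_space M" using pm unfolding privacy_mechanism_def by auto
interpretation prob_space M by (rule PS)

lemma prm_meas: "Prm \<in> M \<rightarrow>\<^sub>M count_space UNIV" using pm unfolding privacy_mechanism_def by auto
lemma dl_meas: "Dl \<in> M \<rightarrow>\<^sub>M count_space UNIV" using pm unfolding privacy_mechanism_def by auto
lemma prm_pt: "bij \<pi> \<Longrightarrow> measure M {w \<in> space M. Prm w = \<pi>} = 1 / real (card {f::'r \<Rightarrow> 'r2. bij f})"
  using pm unfolding privacy_mechanism_def by auto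

lemma Npos: "card {f::'r \<Rightarrow> 'r2. bij f} > 0"
proof -
  obtain h :: "'r \<Rightarrow> 'r2" where "bij_betw h UNIV UNIV"
    using finite_same_card_bij[of "UNIV::'r set" "UNIV::'r2 set"] card by auto
  hence "h \<in> {f. bij f}" by simp
  thus ?thesis by (metis card_gt_0_iff empty_iff finite_class.finite_UNIV finite_subset subset_UNIV)
qed

lemma AE_bij: "AE w in M. bij (Prm w)"
proof -
  let ?Bj = "{f::'r \<Rightarrow> 'r2. bij f}"
  have "measure M ({w\<in>space M. Prm w \<in> ?Bj} \<inter> space M) = (\<Sum>x\<in>?Bj. measure M ({w\<in>space M. Prm w = x} \<inter> space M))"
    by (rule sum_split[OF PS prm_meas]) simp
  also have "\<dots> = (\<Sum>x\<in>?Bj. 1 / real (card ?Bj))"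
    by (rule sum.cong) (auto simp: prm_pt Int_absorb2)
  also have "\<dots> = 1" using Npos by (simp add: card_gt_0_iff)
  finally have "prob {w\<in>space M. bij (Prm w)} = 1" by (simp add: Int_absorb2)
  hence "AE w in M. w \<in> {w\<in>space M. bij (Prm w)}" by (rule AE_prob_1)
  thus ?thesis by (rule AE_mp) (rule AE_I2, simp)
qed

definition dh :: "('r \<Rightarrow> 'v) \<Rightarrow> ('r \<Rightarrow> 'v2)" where
  "dh \<tau> = (THE \<tau>h. measure M {w \<in> space M. Dl w \<tau> = \<tau>h} = 1)"

lemma dh_prop: "measure M {w \<in> space M. Dl w \<tau> = dh \<tau>} = 1"
proof -
  have "\<exists>!\<tau>h. measure M {w \<in> space M. Dl w \<tau> = \<tau>h} = 1"
    using det unfolding deterministic_mech_def by blast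
  from theI'[OF this] show ?thesis unfolding dh_def .
qed

lemma AE_dl: "AE w in M. Dl w = dh"
proof -
  have "AE w in M. \<forall>\<tau>\<in>UNIV. Dl w \<tau> = dh \<tau>"
  proof (rule AE_finite_allI)
    fix \<tau> show "AE w in M. Dl w \<tau> = dh \<tau>"
      using AE_prob_1[OF dh_prop[of \<tau>]] by (rule AE_mp) (rule AE_I2, simp)
  qed simp
  thus ?thesis by (rule AE_mp) (rule AE_I2, simp add: fun_eq_iff)
qed

lemma g_formula:
  assumes mf: "mechanism_from M Prm Dl T T'" and bp: "bij \<pi>"
  shows "measure M {w\<in>space M. T' w = \<tau>' \<and> Prm w = \<pi>}
         = measure M {w\<in>space M. dh (T w) = \<tau>' \<circ> \<pi>} / real (card {f::'r\<Rightarrow>'r2. bij f})"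
proof -
  have Tm: "T \<in> M \<rightarrow>\<^sub>M count_space UNIV" and T'm: "T' \<in> M \<rightarrow>\<^sub>M count_space UNIV"
    and ind: "mutually_indep3 M T Prm Dl" and AEm: "AE w in M. Dl w (T w) = T' w \<circ> Prm w"
    using mf unfolding mechanism_from_def by auto
  have "measure M {w\<in>space M. T' w = \<tau>' \<and> Prm w = \<pi>} = measure M {w\<in>space M. dh (T w) = \<tau>' \<circ> \<pi> \<and> Prm w = \<pi>}"
  proof (rule finite_measure_eq_AE)
    show "AE w in M. (w \<in> {w\<in>space M. T' w = \<tau>' \<and> Prm w = \<pi>}) = (w \<in> {w\<in>space M. dh (T w) = \<tau>' \<circ> \<pi> \<and> Prm w = \<pi>})"
      using AEm AE_dl
    proof eventually_elim
      case (elim w)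
      show ?case
      proof
        assume "w \<in> {w\<in>space M. T' w = \<tau>' \<and> Prm w = \<pi>}"
        thus "w \<in> {w\<in>space M. dh (T w) = \<tau>' \<circ> \<pi> \<and> Prm w = \<pi>}" using elim by auto
      next
        assume h: "w \<in> {w\<in>space M. dh (T w) = \<tau>' \<circ> \<pi> \<and> Prm w = \<pi>}"
        hence "T' w \<circ> \<pi> = \<tau>' \<circ> \<pi>" using elim by auto
        hence "T' w = \<tau>'" using cancel_bij[OF bp] by blast
        thus "w \<in> {w\<in>space M. T' w = \<tau>' \<and> Prm w = \<pi>}" using h by auto
      qed
    qed
    show "{w\<in>space M. T' w = \<tau>' \<and> Prm w = \<pi>} \<in> sets M"
      using meas_pred[OF meas_pair[OF T'm prm_meas], of "\<lambda>(a,b). a = \<tau>' \<and> b = \<pi>"] by simp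
    show "{w\<in>space M. dh (T w) = \<tau>' \<circ> \<pi> \<and> Prm w = \<pi>} \<in> sets M"
      using meas_pred[OF meas_pair[OF Tm prm_meas], of "\<lambda>(a,b). dh a = \<tau>' \<circ> \<pi> \<and> b = \<pi>"] by simp
  qed
  also have "\<dots> = measure M {w\<in>space M. T w \<in> {\<tau>. dh \<tau> = \<tau>' \<circ> \<pi>} \<and> Prm w \<in> {\<pi>} \<and> Dl w \<in> UNIV}"
    by simp
  also have "\<dots> = measure M {w\<in>space M. T w \<in> {\<tau>. dh \<tau> = \<tau>' \<circ> \<pi>}} * measure M {w\<in>space M. Prm w \<in> {\<pi>}}
       * measure M {w\<in>space M. Dl w \<in> UNIV}"
    using ind unfolding mutually_indep3_def by blast
  also have "\<dots> = measure M {w\<in>space M. dh (T w) = \<tau>' \<circ> \<pi>} / real (card {f::'r\<Rightarrow>'r2. bij f})"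
    using prm_pt[OF bp] by (simp add: prob_space)
  finally show ?thesis .
qed

lemma sum_over_bij:
  assumes Em: "E \<in> sets M" and S: "S \<subseteq> {\<pi>. bij \<pi>}"
  shows "measure M ({w\<in>space M. Prm w \<in> S} \<inter> E) = (\<Sum>\<pi>\<in>S. measure M ({w\<in>space M. Prm w = \<pi>} \<inter> E))"
  by (rule sum_split[OF PS prm_meas Em])

lemma dir1:
  assumes kan: "k_anonymization M Prm Dl k" and kpos: "k > 0"
  shows "Pk_anonymization M Prm Dl k"
  unfolding Pk_anonymization_def Pk_anonymous_def
proof (intro allI impI)
  fix \<tau>' T T' r r'
  assume att: "attainable M Prm Dl \<tau>'" and mf: "mechanism_from M Prm Dl T T'"
  have Tm: "T \<in> M \<rightarrow>\<^sub>M count_space UNIV" and T'm: "T' \<in> M \<rightarrow>\<^sub>M count_space UNIV"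
    using mf unfolding mechanism_from_def by auto
  let ?Bj = "{f::'r\<Rightarrow>'r2. bij f}"
  let ?N = "real (card ?Bj)"
  define B where "B = {w\<in>space M. T' w = \<tau>'}"
  define A where "A = {w\<in>space M. Prm w r = r'}"
  define f where "f \<pi> = measure M {w\<in>space M. dh (T w) = \<tau>' \<circ> \<pi>} / ?N" for \<pi>
  have Bm: "B \<in> sets M" unfolding B_def by (rule meas_pred[OF T'm])
  have Am: "A \<in> sets M" unfolding A_def by (rule meas_pred[OF prm_meas])
  have gen: "measure M ({w\<in>space M. Prm w \<in> S} \<inter> B) = (\<Sum>\<pi>\<in>S. f \<pi>)" if S: "S \<subseteq> ?Bj" for S
  proof -
    have "measure M ({w\<in>space M. Prm w \<in> S} \<inter> B) = (\<Sum>\<pi>\<in>S. measure M ({w\<in>space M. Prm w = \<pi>} \<inter> B))"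
      by (rule sum_over_bij[OF Bm S])
    also have "\<dots> = (\<Sum>\<pi>\<in>S. f \<pi>)"
    proof (rule sum.cong)
      fix \<pi> assume "\<pi> \<in> S"
      hence bp: "bij \<pi>" using S by auto
      have "{w\<in>space M. Prm w = \<pi>} \<inter> B = {w\<in>space M. T' w = \<tau>' \<and> Prm w = \<pi>}" unfolding B_def by auto
      thus "measure M ({w\<in>space M. Prm w = \<pi>} \<inter> B) = f \<pi>" using g_formula[OF mf bp] unfolding f_def by simp
    qed simp
    finally show ?thesis .
  qed
  have mB: "measure M B = (\<Sum>\<pi>\<in>?Bj. f \<pi>)"
  proof -
    have "measure M B = measure M ({w\<in>space M. Prm w \<in> ?Bj} \<inter> B)"
    proof (rule finite_measure_eq_AE)
      show "AE x in M. (x \<in> B) = (x \<in> {w \<in> space M. Prm w \<in> ?Bj} \<inter> B)"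
        using AE_bij by eventually_elim (auto simp: B_def)
    qed (use Bm meas_pred[OF prm_meas, of "\<lambda>p. p \<in> ?Bj"] in auto)
    thus ?thesis using gen[of ?Bj] by simp
  qed
  have mAB: "measure M (A \<inter> B) = (\<Sum>\<pi>\<in>{\<pi>. bij \<pi> \<and> \<pi> r = r'}. f \<pi>)"
  proof -
    have "measure M (A \<inter> B) = measure M ({w\<in>space M. Prm w \<in> {\<pi>. bij \<pi> \<and> \<pi> r = r'}} \<inter> B)"
    proof (rule finite_measure_eq_AE)
      show "AE x in M. (x \<in> A \<inter> B) = (x \<in> {w\<in>space M. Prm w \<in> {\<pi>. bij \<pi> \<and> \<pi> r = r'}} \<inter> B)"
        using AE_bij by eventually_elim (auto simp: A_def B_def)
    qed (use Bm Am meas_pred[OF prm_meas, of "\<lambda>p. p \<in> {\<pi>. bij \<pi> \<and> \<pi> r = r'}"] in auto)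
    moreover have "{\<pi>. bij \<pi> \<and> \<pi> r = r'} \<subseteq> ?Bj" by auto
    ultimately show ?thesis using gen[of "{\<pi>. bij \<pi> \<and> \<pi> r = r'}"] by simp
  qed
  have kc: "k \<le> card {rh. \<tau>' rh = \<tau>' r'}"
    using kan att unfolding k_anonymization_def k_anonymous_def by blast
  have key: "real k * measure M (A \<inter> B) \<le> measure M B"
    unfolding mAB mB
  proof (rule count_lemma[OF _ _ kc])
    fix \<pi> show "f \<pi> \<ge> 0" unfolding f_def by simp
  next
    fix \<pi> :: "'r \<Rightarrow> 'r2" and t :: "'r2 \<Rightarrow> 'r2" assume "\<tau>' \<circ> t = \<tau>'"
    hence "\<tau>' \<circ> (t \<circ> \<pi>) = \<tau>' \<circ> \<pi>" by (simp add: o_assoc)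
    thus "f (t \<circ> \<pi>) = f \<pi>" unfolding f_def by simp
  qed
  have cp: "cprob M {w \<in> space M. Prm w r = r'} {w \<in> space M. T' w = \<tau>'} = measure M (A \<inter> B) / measure M B"
    unfolding cprob_def A_def B_def by simp
  have "measure M (A \<inter> B) / measure M B \<le> 1 / real k"
  proof (cases "measure M B = 0")
    case True thus ?thesis by simp
  next
    case False
    hence "measure M B > 0" using measure_nonneg[of M B] by linarith
    thus ?thesis using key kpos by (simp add: divide_simps mult.commute)
  qed
  thus "cprob M {w \<in> space M. Prm w r = r'} {w \<in> space M. T' w = \<tau>'} \<le> 1 / real k"
    using cp by simp
qed

lemma dir2:
  assumes pk: "Pk_anonymization M Prm Dl k" and kpos: "k > 0"
  shows "k_anonymization M Prm Dl k"
  unfolding k_anonymization_def k_anonymous_def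
proof (intro allI impI)
  fix \<tau>' r' assume att: "attainable M Prm Dl \<tau>'"
  from att obtain \<tau>0 where m0: "measure M {w\<in>space M. Dl w \<tau>0 = \<tau>' \<circ> Prm w} \<noteq> 0"
    unfolding attainable_def by blast
  define D where "D = {w\<in>space M. dh \<tau>0 = \<tau>' \<circ> Prm w \<and> bij (Prm w)}"
  have Dm: "D \<in> sets M" unfolding D_def
    by (rule meas_pred[OF prm_meas, of "\<lambda>p. dh \<tau>0 = \<tau>' \<circ> p \<and> bij p"])
  have "measure M D = measure M {w\<in>space M. Dl w \<tau>0 = \<tau>' \<circ> Prm w}"
  proof (rule finite_measure_eq_AE)
    show "AE x in M. (x \<in> D) = (x \<in> {w \<in> space M. Dl w \<tau>0 = \<tau>' \<circ> Prm w})"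
      using AE_dl AE_bij by eventually_elim (auto simp: D_def)
    show "{w\<in>space M. Dl w \<tau>0 = \<tau>' \<circ> Prm w} \<in> sets M"
      using meas_pred[OF meas_pair[OF dl_meas prm_meas], of "\<lambda>(d,p). d \<tau>0 = \<tau>' \<circ> p"] by simp
  qed (rule Dm)
  hence mD: "measure M D > 0" using m0 measure_nonneg[of M D] by linarith
  hence "D \<noteq> {}" by auto
  then obtain w0 where "w0 \<in> D" by auto
  define \<pi>0 where "\<pi>0 = Prm w0"
  have b0: "bij \<pi>0" and d0: "dh \<tau>0 = \<tau>' \<circ> \<pi>0" using \<open>w0 \<in> D\<close> unfolding D_def \<pi>0_def by auto
  define T :: "'w \<Rightarrow> 'r \<Rightarrow> 'v" where "T = (\<lambda>w. \<tau>0)"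
  define T' where "T' = (\<lambda>w. dh \<tau>0 \<circ> inv (Prm w))"
  have Tm: "T \<in> M \<rightarrow>\<^sub>M count_space UNIV" unfolding T_def by simp
  have T'm: "T' \<in> M \<rightarrow>\<^sub>M count_space UNIV" unfolding T'_def
    by (rule meas_comp[OF prm_meas, of "\<lambda>p. dh \<tau>0 \<circ> inv p"])
  have ind: "mutually_indep3 M T Prm Dl"
    unfolding mutually_indep3_def
  proof (intro allI)
    fix A' B' C'
    show "measure M {w \<in> space M. T w \<in> A' \<and> Prm w \<in> B' \<and> Dl w \<in> C'} =
       measure M {w \<in> space M. T w \<in> A'} * measure M {w \<in> space M. Prm w \<in> B'} * measure M {w \<in> space M. Dl w \<in> C'}"
    proof (cases "\<tau>0 \<in> A'")
      case False thus ?thesis by (simp add: T_def)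
    next
      case True
      have sB: "{w \<in> space M. Prm w \<in> B'} \<in> sets M" by (rule meas_pred[OF prm_meas])
      have sC: "{w \<in> space M. Dl w \<in> C'} \<in> sets M" by (rule meas_pred[OF dl_meas])
      have sBC: "{w \<in> space M. Prm w \<in> B' \<and> Dl w \<in> C'} \<in> sets M"
        using meas_pred[OF meas_pair[OF prm_meas dl_meas], of "\<lambda>(p,d). p \<in> B' \<and> d \<in> C'"] by simp
      show ?thesis
      proof (cases "dh \<in> C'")
        case True
        have "measure M {w \<in> space M. Prm w \<in> B' \<and> Dl w \<in> C'} = measure M {w \<in> space M. Prm w \<in> B'}"
          by (rule finite_measure_eq_AE[OF AE_mp[OF AE_dl AE_I2] sBC sB]) (use True in auto)
        moreover have "measure M {w \<in> space M. Dl w \<in> C'} = measure M (space M)"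
          by (rule finite_measure_eq_AE[OF AE_mp[OF AE_dl AE_I2] sC sets.top]) (use True in auto)
        ultimately show ?thesis using \<open>\<tau>0 \<in> A'\<close> by (simp add: T_def prob_space)
      next
        case False
        have "measure M {w \<in> space M. Prm w \<in> B' \<and> Dl w \<in> C'} = measure M {}"
          by (rule finite_measure_eq_AE[OF AE_mp[OF AE_dl AE_I2] sBC sets.empty_sets]) (use False in auto)
        moreover have "measure M {w \<in> space M. Dl w \<in> C'} = measure M {}"
          by (rule finite_measure_eq_AE[OF AE_mp[OF AE_dl AE_I2] sC sets.empty_sets]) (use False in auto)
        ultimately show ?thesis using \<open>\<tau>0 \<in> A'\<close> by (simp add: T_def)
      qed
    qed
  qed
  have AEm: "AE w in M. Dl w (T w) = T' w \<circ> Prm w"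
    using AE_dl AE_bij
  proof eventually_elim
    case (elim w)
    have "T' w \<circ> Prm w = dh \<tau>0 \<circ> (inv (Prm w) \<circ> Prm w)" unfolding T'_def by (simp add: o_assoc)
    also have "\<dots> = dh \<tau>0" using elim(2) by (simp add: bij_is_inj)
    finally show ?case using elim(1) by (simp add: T_def)
  qed
  have mf: "mechanism_from M Prm Dl T T'"
    unfolding mechanism_from_def using pm Tm T'm ind AEm by blast
  have cpb: "cprob M {w\<in>space M. Prm w r = r''} {w\<in>space M. T' w = \<tau>'} \<le> 1 / real k" for r r''
    using pk att mf unfolding Pk_anonymization_def Pk_anonymous_def by blast
  define r where "r = inv \<pi>0 r'"
  have dhr: "dh \<tau>0 r = \<tau>' r'" unfolding d0 r_def using b0 by (simp add: bij_is_surj surj_f_inv_f)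
  define B where "B = {w\<in>space M. T' w = \<tau>'}"
  have Bm: "B \<in> sets M" unfolding B_def by (rule meas_pred[OF T'm])
  have "D \<subseteq> B"
  proof
    fix w assume "w \<in> D"
    hence w: "w \<in> space M" "dh \<tau>0 = \<tau>' \<circ> Prm w" "bij (Prm w)" unfolding D_def by auto
    have "T' w = \<tau>' \<circ> (Prm w \<circ> inv (Prm w))" unfolding T'_def w(2) by (simp add: o_assoc)
    also have "\<dots> = \<tau>'"
    proof -
      have "Prm w \<circ> inv (Prm w) = id" using w(3) bij_is_surj surj_iff by blast
      thus ?thesis by simp
    qed
    finally show "w \<in> B" using w(1) unfolding B_def by simp
  qed
  hence mB: "measure M B > 0" using mD finite_measure_mono[OF _ Bm] by (meson less_le_trans)
  define C where "C = {rh. \<tau>' rh = \<tau>' r'}"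
  have "measure M B = measure M ({w\<in>space M. Prm w r \<in> C} \<inter> B)"
  proof (rule finite_measure_eq_AE[OF _ Bm])
    show "AE x in M. (x \<in> B) = (x \<in> {w \<in> space M. Prm w r \<in> C} \<inter> B)"
      using AE_bij
    proof eventually_elim
      case (elim w)
      show ?case
      proof
        assume wB: "w \<in> B"
        hence "T' w = \<tau>'" "w \<in> space M" unfolding B_def by auto
        hence "\<tau>' (Prm w r) = dh \<tau>0 (inv (Prm w) (Prm w r))" unfolding T'_def by auto
        also have "\<dots> = \<tau>' r'" using elim dhr by (simp add: bij_is_inj)
        finally show "w \<in> {w \<in> space M. Prm w r \<in> C} \<inter> B" using wB \<open>w \<in> space M\<close> by (simp add: C_def)
      qed auto
    qed
    show "{w \<in> space M. Prm w r \<in> C} \<inter> B \<in> sets M"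
      using meas_pred[OF prm_meas, of "\<lambda>p. p r \<in> C"] Bm by auto
  qed
  also have "\<dots> = (\<Sum>r''\<in>C. measure M ({w\<in>space M. Prm w r = r''} \<inter> B))"
    using sum_split[OF PS meas_comp[OF prm_meas, of "\<lambda>p. p r"] Bm, of C] by simp
  also have "\<dots> \<le> (\<Sum>r''\<in>C. measure M B / real k)"
  proof (rule sum_mono)
    fix r'' assume "r'' \<in> C"
    have "measure M ({w\<in>space M. Prm w r = r''} \<inter> B) / measure M B \<le> 1 / real k"
      using cpb[of r r''] unfolding cprob_def B_def .
    thus "measure M ({w\<in>space M. Prm w r = r''} \<inter> B) \<le> measure M B / real k"
      using mB kpos by (simp add: divide_simps)
  qed
  also have "\<dots> = real (card C) * measure M B / real k" by simp
  finally have "measure M B * real k \<le> real (card C) * measure M B" using kpos by (simp add: field_simps)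
  hence "real k \<le> real (card C)" using mB by (simp add: mult.commute)
  thus "k \<le> card {rh. \<tau>' rh = \<tau>' r'}" unfolding C_def by simp
qed

end

theorem corollary3:
  fixes M :: "'w measure"
    and Prm :: "'w \<Rightarrow> 'r::finite \<Rightarrow> 'r2::finite"
    and Dl :: "'w \<Rightarrow> ('r \<Rightarrow> 'v::finite) \<Rightarrow> ('r \<Rightarrow> 'v2::finite)"
    and k :: nat
  assumes "CARD('r) = CARD('r2)"
    and "k > 0"
    and "privacy_mechanism M Prm Dl"
    and "deterministic_mech M Prm Dl"
  shows "k_anonymization M Prm Dl k \<longleftrightarrow> Pk_anonymization M Prm Dl k"
  using dir1[OF assms(1,3,4) _ assms(2)] dir2[OF assms(1,3,4) _ assms(2)] by blast

end
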